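(* Assume (H1) and (H2). Fix $\varepsilon>0$, let $\alpha=2/5$ and let $\delta,\gamma,\rho>0$ be such that $\mathbb{P}_n(\Omega_n^{\alpha,\delta,\gamma,\rho})\ge1-\varepsilon$ for all $n$ large enough; write $\Omega_\varepsilon=\Omega_n^{\alpha,\delta,\gamma,\rho}$. For any $\alpha'>0$ and $a>0$ there exist $\beta>0$, $c>0$ such that for any $s,t\in[0,1]$ with $|s-t|\le(\log n)^{-3}$, for $n$ large enough, $$\mathbb{E}_n\big(\|\mathbf{G}^{(n)}_s-\mathbf{G}^{(n)}_t\|_1^\beta\mathbb{1}_{\Omega_\varepsilon}\big)\le c|t-s|^{1+a}.$$
   Context: Planar trees: finite subsets $T$ of the set of finite words over $\{1,2,\dots\}$ containing the empty word $\emptyset$, with $ui\in T\Rightarrow u\in T$ and $uj\in T$ for $1\le j\le i$; $c_u(T)$ number of children, $|u|$ word length, $d$ graph distance; vertices ordered lexicographically (prefixes first), $u(k)$ the $k$-th vertex, $u(0)=\emptyset$; $\mathcal{T}_n$: trees with $n+1$ vertices. (H1): $\mu=(\mu_k)_{k\ge0}$ probability on $\mathbb{N}$ with $\mu_0+\mu_1\ne1$, $\sum_kk\mu_k=1$, $\sum_{k\le K}\mu_k=1$ for some integer $K>0$. $\mathbf{T}$: GW tree with offspring law $\mu$; $\mathbb{P}_n=\mathbb{P}(\cdot\mid|\mathbf{T}|=n+1)$, $\mathbb{E}_n$ its expectation. (H2): for $k\ge1$, $\nu_k$ probability on $\mathbb{R}^k$, $(Y_{k,1},\dots,Y_{k,k})\sim\nu_k$,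 $m_{k,j}=\mathbb{E}Y_{k,j}$; require $\sum_k\sum_{j\le k}\mu_km_{k,j}=0$, $\sum_k\sum_{j\le k}\mu_k\mathbb{E}(Y^2_{k,j})\in(0,\infty)$, and some $p>4$ with $\mathbb{E}|Y_{k,j}-m_{k,j}|^p<\infty$ for all $1\le j\le k\le K$. $I_K=\{(k,j):1\le j\le k\le K\}$; $\|X\|_1=\sum_{I_K}|X_{k,j}|$. $A_{u,k,j}$: number of strict ancestors $v$ of $u$ with $c_v=k$ and $u$ descending from (or equal to) $vj$; $A_{u,l,k,j}$: number of those with moreover $d(u,v)\le l$. $\mathbf{G}^{(n)}_{k,j}(s)=n^{-1/4}[\mathbf{g}(\lfloor ns\rfloor)+\{ns\}(\mathbf{g}(\lfloor ns\rfloor+1)-\mathbf{g}(\lfloor ns\rfloor))]$ with $\mathbf{g}(l)=A_{u(l),k,j}-\mu_k|u(l)|$. $\mathbf{h}_n(s)=H_{ns}/\sqrt n$ with $H$ the interpolation of $k\mapsto|u(k)|$. $\Omega_n^{\alpha,\delta,\gamma,\rho}$: set of $T\in\mathcal{T}_n$ with $|\mathbf{h}_n(s)-\mathbf{h}_n(t)|\le\delta|t-s|^\alpha$ for all $s,t\in[0,1]$, $\max_l||u(l+1)|-|u(l)||\le\rho\log n$, $|u(n)|<\rho\log n$, and $|A_{u,l,k,j}-\mu_kl|\le\gamma\sqrt{l\log n}$ for all $(k,j)\in I_K$, $u\in T$, $l\in(0,|u|]$. *)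

theory Defs
  imports "HOL-Probability.Probability"
begin

type_synonym word = "nat list"

text \<open>The child \<open>u i\<close> of a word \<open>u\<close> is \<open>u @ [i]\<close>; letters are \<open>\<ge> 1\<close>.\<close>
definition planar_tree :: "word set \<Rightarrow> bool" where
  "planar_tree T \<longleftrightarrow> finite T \<and> [] \<in> T \<and> (\<forall>w\<in>T. \<forall>x\<in>set w. 1 \<le> x) \<and>
     (\<forall>u i. u @ [i] \<in> T \<longrightarrow> u \<in> T \<and> (\<forall>j. 1 \<le> j \<and> j \<le> i \<longrightarrow> u @ [j] \<in> T))"

definition trees_n :: "nat \<Rightarrow> word set set" where
  "trees_n n = {T. planar_tree T \<and> card T = n + 1}"

definition nchildren :: "word set \<Rightarrow> word \<Rightarrow> nat" where
  "nchildren T u = card {i. u @ [i] \<in> T}"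

text \<open>Lexicographic order, prefixes first.\<close>
definition lexless :: "word \<Rightarrow> word \<Rightarrow> bool" where
  "lexless v w \<longleftrightarrow> (v, w) \<in> lexord {(a, b). a < (b::nat)}"

text \<open>\<open>vtx T k\<close> is the \<open>k\<close>-th vertex \<open>u(k)\<close> (with \<open>u(0)\<close> the root).\<close>
definition vtx :: "word set \<Rightarrow> nat \<Rightarrow> word" where
  "vtx T k = (THE v. v \<in> T \<and> card {w\<in>T. lexless w v} = k)"

definition interp :: "(nat \<Rightarrow> real) \<Rightarrow> real \<Rightarrow> real" where
  "interp g x = g (nat \<lfloor>x\<rfloor>) + frac x * (g (nat \<lfloor>x\<rfloor> + 1) - g (nat \<lfloor>x\<rfloor>))"

definition hproc :: "nat \<Rightarrow> word set \<Rightarrow> real \<Rightarrow> real" where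
  "hproc n T s = interp (\<lambda>k. real (length (vtx T k))) (real n * s) / sqrt (real n)"

definition Acount :: "word set \<Rightarrow> word \<Rightarrow> nat \<Rightarrow> nat \<Rightarrow> nat" where
  "Acount T u k j = card {v. strict_prefix v u \<and> nchildren T v = k \<and> prefix (v @ [j]) u}"

definition Acount_l :: "word set \<Rightarrow> word \<Rightarrow> nat \<Rightarrow> nat \<Rightarrow> nat \<Rightarrow> nat" where
  "Acount_l T u l k j = card {v. strict_prefix v u \<and> nchildren T v = k \<and> prefix (v @ [j]) u
                              \<and> length u - length v \<le> l}"

definition IK :: "nat \<Rightarrow> (nat \<times> nat) set" where
  "IK K = {(k, j). 1 \<le> j \<and> j \<le> k \<and> k \<le> K}"

definition Gproc :: "(nat \<Rightarrow> real) \<Rightarrow> nat \<Rightarrow> word set \<Rightarrow> nat \<times> nat \<Rightarrow> real \<Rightarrow> real" where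
  "Gproc \<mu> n T kj s = real n powr (-1/4) *
     interp (\<lambda>l. real (Acount T (vtx T l) (fst kj) (snd kj)) - \<mu> (fst kj) * real (length (vtx T l)))
            (real n * s)"

definition G_l1dist :: "(nat \<Rightarrow> real) \<Rightarrow> nat \<Rightarrow> nat \<Rightarrow> word set \<Rightarrow> real \<Rightarrow> real \<Rightarrow> real" where
  "G_l1dist \<mu> K n T s t = (\<Sum>kj\<in>IK K. \<bar>Gproc \<mu> n T kj s - Gproc \<mu> n T kj t\<bar>)"

definition gw_weight :: "(nat \<Rightarrow> real) \<Rightarrow> word set \<Rightarrow> real" where
  "gw_weight \<mu> T = (\<Prod>u\<in>T. \<mu> (nchildren T u))"

text \<open>\<open>P(|T| = n+1)\<close>.\<close>
definition gw_Z :: "(nat \<Rightarrow> real) \<Rightarrow> nat \<Rightarrow> real" where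
  "gw_Z \<mu> n = (\<Sum>T\<in>trees_n n. gw_weight \<mu> T)"

text \<open>\<open>E_n f\<close> (expectation under \<open>P(\<cdot> | |T| = n+1)\<close>).\<close>
definition En :: "(nat \<Rightarrow> real) \<Rightarrow> nat \<Rightarrow> (word set \<Rightarrow> real) \<Rightarrow> real" where
  "En \<mu> n f = (\<Sum>T\<in>trees_n n. gw_weight \<mu> T * f T) / gw_Z \<mu> n"

definition Pn :: "(nat \<Rightarrow> real) \<Rightarrow> nat \<Rightarrow> word set set \<Rightarrow> real" where
  "Pn \<mu> n A = En \<mu> n (indicator A)"

definition Omega :: "nat \<Rightarrow> nat \<Rightarrow> real \<Rightarrow> real \<Rightarrow> real \<Rightarrow> real \<Rightarrow> (nat \<Rightarrow> real) \<Rightarrow> word set set" where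
  "Omega K n \<alpha> \<delta> \<gamma> \<rho> \<mu> = {T \<in> trees_n n.
      (\<forall>s\<in>{0..1}. \<forall>t\<in>{0..1}. \<bar>hproc n T s - hproc n T t\<bar> \<le> \<delta> * \<bar>t - s\<bar> powr \<alpha>) \<and>
      (\<forall>l<n. \<bar>real (length (vtx T (l+1))) - real (length (vtx T l))\<bar> \<le> \<rho> * ln (real n)) \<and>
      real (length (vtx T n)) < \<rho> * ln (real n) \<and>
      (\<forall>kj\<in>IK K. \<forall>u\<in>T. \<forall>l. 0 < l \<and> l \<le> length u \<longrightarrow>
          \<bar>real (Acount_l T u l (fst kj) (snd kj)) - \<mu> (fst kj) * real l\<bar>
            \<le> \<gamma> * sqrt (real l * ln (real n)))}"

definition H1 :: "(nat \<Rightarrow> real) \<Rightarrow> nat \<Rightarrow> bool" where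
  "H1 \<mu> K \<longleftrightarrow> 0 < K \<and> (\<forall>k. 0 \<le> \<mu> k) \<and> (\<forall>k>K. \<mu> k = 0) \<and> (\<Sum>k\<le>K. \<mu> k) = 1 \<and>
     \<mu> 0 + \<mu> 1 \<noteq> 1 \<and> (\<Sum>k\<le>K. real k * \<mu> k) = 1"

text \<open>\<open>\<nu> k\<close> is a probability law on \<open>\<real>^k\<close>, coordinates indexed by \<open>{1..k}\<close>;
  \<open>Y_{k,j}\<close> is the \<open>j\<close>-th coordinate.\<close>
definition H2 :: "(nat \<Rightarrow> real) \<Rightarrow> nat \<Rightarrow> (nat \<Rightarrow> (nat \<Rightarrow> real) measure) \<Rightarrow> bool" where
  "H2 \<mu> K \<nu> \<longleftrightarrow>
     (\<forall>k\<ge>1. prob_space (\<nu> k) \<and> sets (\<nu> k) = sets (PiM {1..k} (\<lambda>_. borel))) \<and>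
     (\<forall>(k,j)\<in>IK K. integrable (\<nu> k) (\<lambda>y. y j) \<and> integrable (\<nu> k) (\<lambda>y. (y j)\<^sup>2)) \<and>
     (\<Sum>(k,j)\<in>IK K. \<mu> k * (\<integral>y. y j \<partial>\<nu> k)) = 0 \<and>
     0 < (\<Sum>(k,j)\<in>IK K. \<mu> k * (\<integral>y. (y j)\<^sup>2 \<partial>\<nu> k)) \<and>
     (\<exists>p>4. \<forall>(k,j)\<in>IK K. integrable (\<nu> k) (\<lambda>y. \<bar>y j - (\<integral>z. z j \<partial>\<nu> k)\<bar> powr p))"

end

theory Submission
  imports Defs
begin

lemma lexless_irrefl: "\<not> lexless v v"
  unfolding lexless_def by (rule lexord_irreflexive) auto

lemma lexless_trans: "lexless u v \<Longrightarrow> lexless v w \<Longrightarrow> lexless u w"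
  unfolding lexless_def by (erule lexord_trans) (auto simp: trans_def)

lemma lexless_total: "lexless u v \<or> u = v \<or> lexless v u"
  unfolding lexless_def by (rule lexord_linear) auto

lemma lexless_asym: "lexless u v \<Longrightarrow> \<not> lexless v u"
  using lexless_irrefl lexless_trans by blast

lemma lexless_prefix: "prefix z v \<Longrightarrow> z \<noteq> v \<Longrightarrow> lexless z v"
  unfolding lexless_def prefix_def
  by (metis append_Nil2 lexord_append_rightI neq_Nil_conv)

lemma lexless_branch: "a < b \<Longrightarrow> lexless (w @ a # x) (w @ b # y)"
  unfolding lexless_def by (rule lexord_append_left_rightI) simp

definition rk :: "word set \<Rightarrow> word \<Rightarrow> nat" where
  "rk T v = card {w\<in>T. lexless w v}"

lemma rk_less: "finite T \<Longrightarrow> v \<in> T \<Longrightarrow> rk T v < card T"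
  unfolding rk_def apply (rule psubset_card_mono) using lexless_irrefl by blast+

lemma rk_mono: "finite T \<Longrightarrow> v \<in> T \<Longrightarrow> lexless v v' \<Longrightarrow> rk T v < rk T v'"
  unfolding rk_def
proof (rule psubset_card_mono)
  assume a: "finite T" "v \<in> T" "lexless v v'"
  show "finite {w \<in> T. lexless w v'}" using a by simp
  have "{w \<in> T. lexless w v} \<subseteq> {w \<in> T. lexless w v'}" using a lexless_trans by blast
  moreover have "v \<notin> {w \<in> T. lexless w v}" using lexless_irrefl by blast
  moreover have "v \<in> {w \<in> T. lexless w v'}" using a by blast
  ultimately show "{w \<in> T. lexless w v} \<subset> {w \<in> T. lexless w v'}"
    by blast
qed

lemma rk_inj: "finite T \<Longrightarrow> inj_on (rk T) T"
proof (rule inj_onI)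
  fix x y assume f: "finite T" and xy: "x \<in> T" "y \<in> T" "rk T x = rk T y"
  show "x = y" using lexless_total[of x y] rk_mono[OF f xy(1), of y] rk_mono[OF f xy(2), of x] xy(3) by auto
qed

lemma rk_image: "finite T \<Longrightarrow> rk T ` T = {..<card T}"
proof -
  assume f: "finite T"
  have "rk T ` T \<subseteq> {..<card T}" using rk_less[OF f] by auto
  moreover have "card (rk T ` T) = card {..<card T}"
    using card_image[OF rk_inj[OF f]] by simp
  ultimately show ?thesis by (simp add: card_subset_eq)
qed

lemma vtx_prop: assumes f: "finite T" and k: "k < card T"
  shows "vtx T k \<in> T \<and> rk T (vtx T k) = k"
proof -
  obtain v where v: "v \<in> T" "rk T v = k" using rk_image[OF f] k by (metis imageE lessThan_iff)
  have "\<exists>!v. v \<in> T \<and> card {w\<in>T. lexless w v} = k"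
  proof (rule ex1I[of _ v])
    show "v \<in> T \<and> card {w \<in> T. lexless w v} = k" using v unfolding rk_def by simp
  next
    fix y assume "y \<in> T \<and> card {w \<in> T. lexless w y} = k"
    then show "y = v" using v rk_inj[OF f] unfolding rk_def inj_on_def by auto
  qed
  then show ?thesis unfolding vtx_def rk_def by (rule theI')
qed

lemma vtx_rk: assumes f: "finite T" and v: "v \<in> T" shows "vtx T (rk T v) = v"
  using vtx_prop[OF f rk_less[OF f v]] rk_inj[OF f] v by (meson inj_onD)

lemma vtx_mono: assumes f: "finite T" and "i < j" "j < card T"
  shows "lexless (vtx T i) (vtx T j)"
proof -
  have a: "vtx T i \<in> T" "rk T (vtx T i) = i" using vtx_prop[OF f] assms by auto
  have b: "vtx T j \<in> T" "rk T (vtx T j) = j" using vtx_prop[OF f] assms by auto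
  show ?thesis
  proof (rule ccontr)
    assume "\<not> ?thesis"
    then have "vtx T i = vtx T j \<or> lexless (vtx T j) (vtx T i)" using lexless_total by blast
    then show False using rk_mono[OF f b(1), of "vtx T i"] a b \<open>i<j\<close> by auto
  qed
qed

lemma prefix_closed: assumes "planar_tree T" shows "v \<in> T \<Longrightarrow> prefix p v \<Longrightarrow> p \<in> T"
proof (induction v rule: rev_induct)
  case Nil then show ?case by simp
next
  case (snoc x xs)
  then show ?case using assms unfolding planar_tree_def
    by (metis prefix_snoc)
qed


lemma finite_S: "finite {v. strict_prefix v u \<and> P v}"
  by (rule finite_subset[of _ "set (prefixes u)"]) auto

lemma Acount_split: assumes "prefix w u"
  shows "Acount T u k j = card {v. strict_prefix v u \<and> nchildren T v = k \<and> prefix (v @ [j]) u \<and> length v < length w}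
     + Acount_l T u (length u - length w) k j"
proof -
  have lw: "length w \<le> length u" using assms prefix_length_le by blast
  have eq: "{v. strict_prefix v u \<and> nchildren T v = k \<and> prefix (v @ [j]) u} =
     {v. strict_prefix v u \<and> nchildren T v = k \<and> prefix (v @ [j]) u \<and> length v < length w} \<union>
     {v. strict_prefix v u \<and> nchildren T v = k \<and> prefix (v @ [j]) u \<and> length u - length v \<le> length u - length w}"
    using lw by auto
  show ?thesis unfolding Acount_def Acount_l_def eq
    by (rule card_Un_disjoint) (auto intro: finite_S dest: prefix_length_less)
qed

lemma low_part_eq: assumes "prefix w u" "prefix w u'"
  shows "{v. strict_prefix v u \<and> nchildren T v = k \<and> prefix (v @ [j]) u \<and> length v < length w}
       \<subseteq> {v. strict_prefix v u' \<and> nchildren T v = k \<and> prefix (v @ [j]) u' \<and> length v < length w}"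
proof safe
  fix v assume v: "strict_prefix v u" "prefix (v @ [j]) u" "length v < length w"
  have "prefix (v @ [j]) w" using prefix_length_prefix[OF v(2) assms(1)] v(3) by simp
  then have p: "prefix (v @ [j]) u'" using assms(2) prefix_order.trans by blast
  then show "prefix (v @ [j]) u'" .
  show "strict_prefix v u'" using p
    by (metis append_self_conv prefix_order.dual_order.strict_trans1 not_Cons_self2 prefix_prefix strict_prefixI' prefix_order.order_refl)
qed

lemma Acount_l_0: "Acount_l T u 0 k j = 0"
proof -
  have "{v. strict_prefix v u \<and> nchildren T v = k \<and> prefix (v @ [j]) u \<and> length u - length v \<le> 0} = {}"
  proof (rule equals0I)
    fix v assume "v \<in> {v. strict_prefix v u \<and> nchildren T v = k \<and> prefix (v @ [j]) u \<and> length u - length v \<le> 0}"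
    then have "strict_prefix v u" "length u - length v \<le> 0" by auto
    then show False using prefix_length_less by fastforce
  qed
  then show ?thesis unfolding Acount_l_def by (simp only: card.empty)
qed

lemma g_diff: assumes "prefix w u" "prefix w u'"
  shows "real (Acount T u k j) - m * real (length u) - (real (Acount T u' k j) - m * real (length u'))
    = (real (Acount_l T u (length u - length w) k j) - m * real (length u - length w))
     - (real (Acount_l T u' (length u' - length w) k j) - m * real (length u' - length w))"
proof -
  have lw: "length w \<le> length u" "length w \<le> length u'" using assms prefix_length_le by blast+
  have e: "{v. strict_prefix v u \<and> nchildren T v = k \<and> prefix (v @ [j]) u \<and> length v < length w}
       = {v. strict_prefix v u' \<and> nchildren T v = k \<and> prefix (v @ [j]) u' \<and> length v < length w}"
    using low_part_eq[OF assms] low_part_eq[OF assms(2,1)] by blast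
  show ?thesis using Acount_split[OF assms(1), of T k j] Acount_split[OF assms(2), of T k j] e lw
    by (simp add: of_nat_diff algebra_simps)
qed


lemma branch_point:
  assumes pt: "planar_tree T" and ij: "i < j" "j < card T"
  shows "\<exists>w. prefix w (vtx T i) \<and> prefix w (vtx T j) \<and>
           (w = vtx T i \<or> (\<exists>k. i < k \<and> k \<le> j \<and> length (vtx T k) = length w + 1))"
proof -
  have f: "finite T" using pt unfolding planar_tree_def by simp
  define u where "u = vtx T i"
  define v where "v = vtx T j"
  have uT: "u \<in> T" "rk T u = i" using vtx_prop[OF f] ij unfolding u_def by auto
  have vT: "v \<in> T" "rk T v = j" using vtx_prop[OF f] ij unfolding v_def by auto
  have uv: "lexless u v" unfolding u_def v_def by (rule vtx_mono[OF f ij])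
  define w where "w = longest_common_prefix u v"
  obtain x where x: "u = w @ x" using longest_common_prefix_prefix1[of u v] unfolding w_def prefix_def by blast
  obtain y where y: "v = w @ y" using longest_common_prefix_prefix2[of u v] unfolding w_def prefix_def by blast
  show ?thesis
  proof (cases x)
    case Nil
    then show ?thesis using x y unfolding u_def[symmetric] v_def[symmetric] by (intro exI[of _ w]) auto
  next
    case (Cons a x')
    show ?thesis
    proof (cases y)
      case Nil
      then have "v = w" using y by simp
      then have "prefix v u" "v \<noteq> u" using x uv lexless_irrefl by auto
      then have "lexless v u" by (rule lexless_prefix)
      then show ?thesis using uv lexless_asym by blast
    next
      case (Cons b y')
      have ab: "a \<noteq> b"
      proof
        assume "a = b"
        then have "prefix (w @ [a]) u" "prefix (w @ [a]) v" using x y \<open>x = a # x'\<close> Cons by auto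
        then have "prefix (w @ [a]) w" unfolding w_def by (rule longest_common_prefix_max_prefix)
        then show False using prefix_length_le by fastforce
      qed
      have ab2: "a < b"
      proof (rule ccontr)
        assume "\<not> a < b"
        then have "b < a" using ab by simp
        then have "lexless v u" using x y \<open>x = a # x'\<close> Cons lexless_branch by simp
        then show False using uv lexless_asym by blast
      qed
      define z where "z = w @ [b]"
      have zT: "z \<in> T" using prefix_closed[OF pt vT(1)] y Cons unfolding z_def by simp
      have uz: "lexless u z" using lexless_branch[OF ab2, of w x' "[]"] x \<open>x = a # x'\<close> unfolding z_def by simp
      have zv: "z = v \<or> lexless z v" using lexless_prefix[of z v] y Cons unfolding z_def by auto
      define k where "k = rk T z"
      have k1: "i < k" using rk_mono[OF f uT(1) uz] uT unfolding k_def by simp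
      have k2: "k \<le> j" using zv rk_mono[OF f zT, of v] vT unfolding k_def by auto
      have "vtx T k = z" unfolding k_def by (rule vtx_rk[OF f zT])
      then have "length (vtx T k) = length w + 1" unfolding z_def by simp
      then show ?thesis using k1 k2 x y unfolding u_def[symmetric] v_def[symmetric]
        by (intro exI[of _ w]) auto
    qed
  qed
qed


lemma interp_nat[simp]: "interp g (real m) = g m"
  unfolding interp_def by (simp add: frac_def)

lemma hproc_nat: "n > 0 \<Longrightarrow> hproc n T (real m / real n) = real (length (vtx T m)) / sqrt (real n)"
  unfolding hproc_def by simp

lemma depth_holder:
  assumes T: "T \<in> Omega K n \<alpha> \<delta> \<gamma> \<rho> \<mu>" and n: "n > 0" and i: "i \<le> n" and k: "k \<le> n"
  shows "\<bar>real (length (vtx T i)) - real (length (vtx T k))\<bar>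
           \<le> \<delta> * sqrt (real n) * (\<bar>real k - real i\<bar> / real n) powr \<alpha>"
proof -
  have s: "real i / real n \<in> {0..1}" "real k / real n \<in> {0..1}" using i k n by auto
  have h: "\<bar>hproc n T (real i / real n) - hproc n T (real k / real n)\<bar>
       \<le> \<delta> * \<bar>real k / real n - real i / real n\<bar> powr \<alpha>"
    using T s unfolding Omega_def by blast
  have e: "\<bar>real k / real n - real i / real n\<bar> = \<bar>real k - real i\<bar> / real n"
    using n by (simp add: diff_divide_distrib[symmetric])
  have sq: "sqrt (real n) > 0" using n by simp
  have "\<bar>real (length (vtx T i)) - real (length (vtx T k))\<bar>
      = sqrt (real n) * \<bar>hproc n T (real i / real n) - hproc n T (real k / real n)\<bar>"
    using sq by (simp add: hproc_nat[OF n] diff_divide_distrib[symmetric] abs_div)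
  also have "\<dots> \<le> sqrt (real n) * (\<delta> * \<bar>real k / real n - real i / real n\<bar> powr \<alpha>)"
    using h sq by simp
  finally show ?thesis using e by (simp add: mult_ac)
qed

lemma om_bound:
  assumes T: "T \<in> Omega K n \<alpha> \<delta> \<gamma> \<rho> \<mu>" and kj: "(k, j) \<in> IK K" and u: "u \<in> T"
    and l: "l \<le> length u" and L: "real l \<le> L" and g: "\<gamma> > 0" and n: "n \<ge> 1"
  shows "\<bar>real (Acount_l T u l k j) - \<mu> k * real l\<bar> \<le> \<gamma> * sqrt (L * ln (real n))"
proof (cases "l = 0")
  case True
  have "0 \<le> L" using L True by simp
  moreover have "0 \<le> ln (real n)" using n by simp
  ultimately show ?thesis using g True by (simp add: Acount_l_0)
next
  case False
  then have "\<bar>real (Acount_l T u l k j) - \<mu> k * real l\<bar> \<le> \<gamma> * sqrt (real l * ln (real n))"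
    using T kj u l unfolding Omega_def by fastforce
  also have "\<dots> \<le> \<gamma> * sqrt (L * ln (real n))"
    using g n L by (intro mult_left_mono real_sqrt_le_mono mult_right_mono) auto
  finally show ?thesis .
qed


lemma int_bound:
  assumes T: "T \<in> Omega K n (2/5) \<delta> \<gamma> \<rho> \<mu>" and kj: "(k, j') \<in> IK K"
    and g: "\<gamma> > 0" and d: "\<delta> > 0" and n: "n \<ge> 1" and ij: "i < j" "j \<le> n"
  shows "\<bar>(real (Acount T (vtx T i) k j') - \<mu> k * real (length (vtx T i)))
        - (real (Acount T (vtx T j) k j') - \<mu> k * real (length (vtx T j)))\<bar>
     \<le> 2 * \<gamma> * sqrt ((\<delta> * sqrt (real n) * ((real j - real i) / real n) powr (2/5) + 1) * ln (real n))"
proof -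
  define M where "M = \<delta> * sqrt (real n) * ((real j - real i) / real n) powr (2/5)"
  have Tt: "T \<in> trees_n n" using T unfolding Omega_def by simp
  then have pt: "planar_tree T" and cT: "card T = n + 1" unfolding trees_n_def by auto
  have f: "finite T" using pt unfolding planar_tree_def by simp
  have n0: "n > 0" using n by simp
  have uT: "vtx T i \<in> T" "vtx T j \<in> T" using vtx_prop[OF f] ij cT by auto
  have DH: "\<And>a b. a \<le> j \<Longrightarrow> i \<le> a \<Longrightarrow> i \<le> b \<Longrightarrow> b \<le> j \<Longrightarrow>
      \<bar>real (length (vtx T a)) - real (length (vtx T b))\<bar> \<le> M"
  proof -
    fix a b assume ab: "a \<le> j" "i \<le> a" "i \<le> b" "b \<le> j"
    have "\<bar>real (length (vtx T a)) - real (length (vtx T b))\<bar>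
       \<le> \<delta> * sqrt (real n) * (\<bar>real b - real a\<bar> / real n) powr (2/5)"
      using depth_holder[OF T n0] ab ij by simp
    also have "\<dots> \<le> M" unfolding M_def using ab d n0
      by (intro mult_left_mono powr_mono2 divide_right_mono) auto
    finally show "\<bar>real (length (vtx T a)) - real (length (vtx T b))\<bar> \<le> M" .
  qed
  obtain w where w: "prefix w (vtx T i)" "prefix w (vtx T j)"
    "w = vtx T i \<or> (\<exists>k. i < k \<and> k \<le> j \<and> length (vtx T k) = length w + 1)"
    using branch_point[OF pt ij(1)] ij cT by auto
  have lw: "length w \<le> length (vtx T i)" "length w \<le> length (vtx T j)" using w prefix_length_le by blast+
  have M0: "0 \<le> M" using DH[of i i] ij by simp
  have L: "real (length (vtx T i) - length w) \<le> M + 1 \<and> real (length (vtx T j) - length w) \<le> M + 1"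
    using w(3)
  proof
    assume "w = vtx T i"
    then show ?thesis using DH[of j i] ij M0 lw by (simp add: of_nat_diff)
  next
    assume "\<exists>k. i < k \<and> k \<le> j \<and> length (vtx T k) = length w + 1"
    then obtain k where k: "i < k" "k \<le> j" "length (vtx T k) = length w + 1" by blast
    show ?thesis using DH[of i k] DH[of j k] k ij lw by (simp add: of_nat_diff abs_le_iff)
  qed
  have "\<bar>(real (Acount T (vtx T i) k j') - \<mu> k * real (length (vtx T i)))
        - (real (Acount T (vtx T j) k j') - \<mu> k * real (length (vtx T j)))\<bar>
    = \<bar>(real (Acount_l T (vtx T i) (length (vtx T i) - length w) k j') - \<mu> k * real (length (vtx T i) - length w))
     - (real (Acount_l T (vtx T j) (length (vtx T j) - length w) k j') - \<mu> k * real (length (vtx T j) - length w))\<bar>"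
    using g_diff[OF w(1,2), of T k j' "\<mu> k"] by simp
  also have "\<dots> \<le> \<gamma> * sqrt ((M+1) * ln (real n)) + \<gamma> * sqrt ((M+1) * ln (real n))"
    using om_bound[OF T kj uT(1) _ _ g n, of "length (vtx T i) - length w" "M+1"]
      om_bound[OF T kj uT(2) _ _ g n, of "length (vtx T j) - length w" "M+1"] L
    by (smt (verit) diff_le_self)
  finally show ?thesis unfolding M_def by simp
qed


lemma le_self_powr: "0 \<le> t \<Longrightarrow> t \<le> 1 \<Longrightarrow> \<theta> \<le> 1 \<Longrightarrow> t \<le> t powr (\<theta>::real)"
  using powr_mono'[of \<theta> 1 t] by simp

locale holderseq =
  fixes f :: "nat \<Rightarrow> real" and C \<theta> :: real and N :: nat
  assumes C: "C \<ge> 0" and th: "0 < \<theta>" "\<theta> \<le> 1"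
    and H: "\<And>i j. i \<le> N \<Longrightarrow> j \<le> N \<Longrightarrow> \<bar>f i - f j\<bar> \<le> C * \<bar>real i - real j\<bar> powr \<theta>"
begin

lemma step: "i + 1 \<le> N \<Longrightarrow> \<bar>f (i+1) - f i\<bar> \<le> C"
  using H[of "i+1" i] by simp

lemma L1: assumes z: "0 \<le> z" "z \<le> real N"
  shows "\<bar>interp f z - f (nat \<lfloor>z\<rfloor>)\<bar> \<le> C * (z - real (nat \<lfloor>z\<rfloor>)) powr \<theta>"
proof (cases "frac z = 0")
  case True
  have "interp f z = f (nat \<lfloor>z\<rfloor>)" unfolding interp_def True by simp
  then show ?thesis using C by simp
next
  case False
  define m where "m = nat \<lfloor>z\<rfloor>"
  have zm: "z = real m + frac z"
  proof -
    have "real (nat \<lfloor>z\<rfloor>) = of_int \<lfloor>z\<rfloor>" using z by simp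
    then show ?thesis unfolding m_def frac_def by simp
  qed
  have fr: "0 < frac z" "frac z < 1" using False frac_lt_1 frac_ge_0 by (auto simp: order.order_iff_strict)
  have "real m < real N" using zm fr z by linarith
  then have "m + 1 \<le> N" by simp
  then have s: "\<bar>f (m+1) - f m\<bar> \<le> C" by (rule step)
  have "\<bar>interp f z - f m\<bar> = frac z * \<bar>f (m+1) - f m\<bar>"
    unfolding interp_def m_def[symmetric] using fr by (simp add: abs_mult)
  also have "\<dots> \<le> frac z * C" using s fr by (intro mult_left_mono) auto
  also have "\<dots> \<le> C * frac z powr \<theta>" using le_self_powr[of "frac z" \<theta>] fr th C
    by (simp add: mult.commute mult_left_mono)
  also have "frac z = z - real m" using zm by linarith
  finally show ?thesis unfolding m_def .
qed

lemma L2: assumes z: "0 \<le> z" "z \<le> real N" and mN: "nat \<lfloor>z\<rfloor> + 1 \<le> N"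
  shows "\<bar>interp f z - f (nat \<lfloor>z\<rfloor> + 1)\<bar> \<le> C * (real (nat \<lfloor>z\<rfloor>) + 1 - z) powr \<theta>"
proof -
  define m where "m = nat \<lfloor>z\<rfloor>"
  have zm: "z = real m + frac z"
  proof -
    have "real (nat \<lfloor>z\<rfloor>) = of_int \<lfloor>z\<rfloor>" using z by simp
    then show ?thesis unfolding m_def frac_def by simp
  qed
  have fr: "0 \<le> frac z" "frac z < 1" using frac_lt_1 frac_ge_0 by auto
  have s: "\<bar>f (m+1) - f m\<bar> \<le> C" using step mN m_def by simp
  have "\<bar>interp f z - f (m + 1)\<bar> = (1 - frac z) * \<bar>f (m+1) - f m\<bar>"
  proof -
    have "interp f z - f (m + 1) = -((1 - frac z) * (f (m+1) - f m))"
      unfolding interp_def m_def[symmetric] by (simp add: algebra_simps)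
    then show ?thesis using fr by (simp only: abs_minus abs_mult)
  qed
  also have "\<dots> \<le> (1 - frac z) * C" using s fr by (intro mult_left_mono) auto
  also have "\<dots> \<le> C * (1 - frac z) powr \<theta>" using le_self_powr[of "1 - frac z" \<theta>] fr th C
    by (simp add: mult.commute mult_left_mono)
  also have "1 - frac z = real m + 1 - z" using zm by linarith
  finally show ?thesis unfolding m_def .
qed

lemma main_le: assumes xy: "0 \<le> x" "x \<le> y" "y \<le> real N"
  shows "\<bar>interp f x - interp f y\<bar> \<le> 3 * C * (y - x) powr \<theta>"
proof -
  define i where "i = nat \<lfloor>x\<rfloor>"
  define j where "j = nat \<lfloor>y\<rfloor>"
  have x0: "0 \<le> y" using xy by simp
  have ix: "real i \<le> x" "x < real i + 1" unfolding i_def using xy by linarith+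
  have jy: "real j \<le> y" "y < real j + 1" unfolding j_def using xy by linarith+
  have ij: "i \<le> j" unfolding i_def j_def using xy by (simp add: floor_mono nat_mono)
  have P0: "0 \<le> C * (y - x) powr \<theta>" using C by simp
  have mono: "\<And>t. 0 \<le> t \<Longrightarrow> t \<le> y - x \<Longrightarrow> C * t powr \<theta> \<le> C * (y - x) powr \<theta>"
    using C th by (intro mult_left_mono powr_mono2) auto
  show ?thesis
  proof (cases "i = j")
    case True
    show ?thesis
    proof (cases "i + 1 \<le> N")
      case True2: True
      have "interp f x - interp f y = (frac x - frac y) * (f (i+1) - f i)"
        unfolding interp_def i_def[symmetric] j_def[symmetric] True by (simp add: algebra_simps)
      moreover have "frac x - frac y = x - y"
      proof -
        have "real i = of_int \<lfloor>x\<rfloor>" "real j = of_int \<lfloor>y\<rfloor>" unfolding i_def j_def using xy by auto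
        then show ?thesis unfolding frac_def using True by simp
      qed
      ultimately have "\<bar>interp f x - interp f y\<bar> = (y - x) * \<bar>f (i+1) - f i\<bar>"
        using xy by (simp add: abs_mult)
      also have "\<dots> \<le> (y - x) * C" using step[OF True2] xy by (intro mult_left_mono) auto
      also have "\<dots> \<le> C * (y - x) powr \<theta>"
        using le_self_powr[of "y - x" \<theta>] xy ix jy True th C by (simp add: mult.commute mult_left_mono)
      finally show ?thesis using P0 by simp
    next
      case False
      then have "real N \<le> real i" by simp
      then have "x = y" using ix xy by linarith
      then show ?thesis using P0 by simp
    qed
  next
    case False
    then have ij2: "i + 1 \<le> j" using ij by simp
    have "real j \<le> real N" using jy xy by linarith
    then have jN: "j \<le> N" by simp
    have ij3: "real i + 1 \<le> real j" proof -
      have "real (i + 1) \<le> real j" using ij2 by (simp only: of_nat_le_iff)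
      then show ?thesis by simp
    qed
    have a: "\<bar>interp f x - f (i+1)\<bar> \<le> C * (y - x) powr \<theta>"
    proof -
      have "\<bar>interp f x - f (i+1)\<bar> \<le> C * (real i + 1 - x) powr \<theta>"
        using L2[of x] xy ij2 jN unfolding i_def by simp
      also have "\<dots> \<le> C * (y - x) powr \<theta>" using ix jy ij3 by (intro mono) linarith+
      finally show ?thesis .
    qed
    have b: "\<bar>f (i+1) - f j\<bar> \<le> C * (y - x) powr \<theta>"
    proof -
      have "\<bar>f (i+1) - f j\<bar> \<le> C * \<bar>real (i+1) - real j\<bar> powr \<theta>" using H[of "i+1" j] ij2 jN by simp
      also have "\<dots> = C * (real j - (real i + 1)) powr \<theta>" using ij3 by (simp add: add.commute)
      also have "\<dots> \<le> C * (y - x) powr \<theta>" using ix jy ij3 by (intro mono) linarith+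
      finally show ?thesis .
    qed
    have c: "\<bar>interp f y - f j\<bar> \<le> C * (y - x) powr \<theta>"
    proof -
      have "\<bar>interp f y - f j\<bar> \<le> C * (y - real j) powr \<theta>"
        using L1[of y] xy unfolding j_def by simp
      also have "\<dots> \<le> C * (y - x) powr \<theta>" using ix jy ij3 by (intro mono) linarith+
      finally show ?thesis .
    qed
    show ?thesis using a b c by linarith
  qed
qed

lemma main: assumes "0 \<le> x" "x \<le> real N" "0 \<le> y" "y \<le> real N"
  shows "\<bar>interp f x - interp f y\<bar> \<le> 3 * C * \<bar>x - y\<bar> powr \<theta>"
proof (cases "x \<le> y")
  case True
  then show ?thesis using main_le[of x y] assms by simp
next
  case False
  then show ?thesis using main_le[of y x] assms by (simp add: abs_minus_commute)
qed

end


lemma real_conv: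
  fixes n m \<delta> \<gamma> :: real
  assumes n: "1 \<le> n" and m: "1 \<le> m" and d: "\<delta> > 0" and g: "\<gamma> > 0"
  shows "2 * \<gamma> * sqrt ((\<delta> * sqrt n * (m / n) powr (2/5) + 1) * ln n)
     \<le> (2 * \<gamma> * sqrt ((\<delta> + 1) * ln n) * n powr (1/4) * n powr (-1/5)) * m powr (1/5)"
proof -
  define A where "A = n powr (1/10) * m powr (2/5)"
  have eA: "sqrt n * (m / n) powr (2/5) = A"
  proof -
    have "sqrt n = n powr (1/2)" using n by (simp add: powr_half_sqrt)
    moreover have "(m / n) powr (2/5) = m powr (2/5) * n powr (-(2/5))"
    proof -
      have "(m / n) powr (2/5) = m powr (2/5) / n powr (2/5)" by (rule powr_divide)
      also have "\<dots> = m powr (2/5) * n powr (-(2/5))" by (simp only: powr_minus divide_inverse)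
      finally show ?thesis .
    qed
    moreover have "n powr (1/2) * n powr (-(2/5)) = n powr (1/10)"
      by (simp add: powr_add[symmetric])
    ultimately show ?thesis unfolding A_def by (simp add: mult_ac)
  qed
  have A1: "1 \<le> A" unfolding A_def using n m
    by (intro mult_ge1_I ge_one_powr_ge_zero) auto
  have L0: "0 \<le> ln n" using n by simp
  have sA: "sqrt A = n powr (1/4) * n powr (-1/5) * m powr (1/5)"
  proof -
    have "sqrt A = A powr (1/2)" using A1 by (simp add: powr_half_sqrt)
    also have "\<dots> = n powr (1/20) * m powr (1/5)" unfolding A_def
      using n m by (simp add: powr_mult powr_powr)
    also have "n powr (1/20) = n powr (1/4) * n powr (-1/5)" by (simp add: powr_add[symmetric])
    finally show ?thesis .
  qed
  have "sqrt ((\<delta> * A + 1) * ln n) \<le> sqrt (((\<delta> + 1) * ln n) * A)"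
  proof (rule real_sqrt_le_mono)
    have "1 * ln n \<le> A * ln n" using A1 L0 by (intro mult_right_mono) auto
    then show "(\<delta> * A + 1) * ln n \<le> ((\<delta> + 1) * ln n) * A" by (simp add: algebra_simps)
  qed
  also have "\<dots> = sqrt ((\<delta> + 1) * ln n) * (n powr (1/4) * n powr (-1/5) * m powr (1/5))"
    by (simp add: real_sqrt_mult sA)
  finally have "sqrt ((\<delta> * A + 1) * ln n) \<le> sqrt ((\<delta> + 1) * ln n) * (n powr (1/4) * n powr (-1/5) * m powr (1/5))" .
  then have "2 * \<gamma> * sqrt ((\<delta> * A + 1) * ln n) \<le> 2 * \<gamma> * (sqrt ((\<delta> + 1) * ln n) * (n powr (1/4) * n powr (-1/5) * m powr (1/5)))"
    using g by simp
  then show ?thesis using eA by (simp only: mult.assoc)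
qed




lemma tree_bound:
  assumes T: "T \<in> Omega K n (2/5) \<delta> \<gamma> \<rho> \<mu>" and kj: "kj \<in> IK K"
    and g: "\<gamma> > 0" and d: "\<delta> > 0" and n: "n \<ge> 1"
    and s: "s \<in> {0..1}" and t: "t \<in> {0..1}"
  shows "\<bar>Gproc \<mu> n T kj s - Gproc \<mu> n T kj t\<bar> \<le> 6 * \<gamma> * sqrt ((\<delta> + 1) * ln (real n)) * \<bar>s - t\<bar> powr (1/5)"
proof -
  obtain k j' where kj': "kj = (k, j')" by (cases kj)
  define f where "f = (\<lambda>l. real (Acount T (vtx T l) k j') - \<mu> k * real (length (vtx T l)))"
  define C where "C = 2 * \<gamma> * sqrt ((\<delta> + 1) * ln (real n)) * real n powr (1/4) * real n powr (-1/5)"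
  have n1: "1 \<le> real n" using n by simp
  have C0: "C \<ge> 0" unfolding C_def using g d n1 by simp
  have H0: "\<And>i j. i < j \<Longrightarrow> j \<le> n \<Longrightarrow> \<bar>f i - f j\<bar> \<le> C * \<bar>real i - real j\<bar> powr (1/5)"
  proof -
    fix i j assume ij: "i < j" "j \<le> n"
    have m1: "1 \<le> real j - real i" using ij by simp
    have "\<bar>f i - f j\<bar> \<le> 2 * \<gamma> * sqrt ((\<delta> * sqrt (real n) * ((real j - real i) / real n) powr (2/5) + 1) * ln (real n))"
      unfolding f_def using int_bound[OF T _ g d n ij] kj kj' by simp
    also have "\<dots> \<le> C * (real j - real i) powr (1/5)"
      unfolding C_def by (rule real_conv[OF n1 m1 d g])
    also have "real j - real i = \<bar>real i - real j\<bar>" using ij by simp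
    finally show "\<bar>f i - f j\<bar> \<le> C * \<bar>real i - real j\<bar> powr (1/5)" .
  qed
  interpret holderseq f C "1/5" n
  proof
    fix i j assume "i \<le> n" "j \<le> n"
    consider "i < j" | "i = j" | "j < i" by linarith
    then show "\<bar>f i - f j\<bar> \<le> C * \<bar>real i - real j\<bar> powr (1/5)"
    proof cases
      case 1 then show ?thesis using H0 \<open>j \<le> n\<close> by blast
    next
      case 2 then show ?thesis by simp
    next
      case 3 then show ?thesis using H0[of j i] \<open>i \<le> n\<close> by (simp add: abs_minus_commute)
    qed
  qed (use C0 in auto)
  have x: "0 \<le> real n * s" "real n * s \<le> real n" "0 \<le> real n * t" "real n * t \<le> real n"
    using s t by (auto simp: mult_left_le)
  have G: "\<And>r. Gproc \<mu> n T kj r = real n powr (-1/4) * interp f (real n * r)"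
    unfolding Gproc_def f_def kj' by simp
  have "\<bar>Gproc \<mu> n T kj s - Gproc \<mu> n T kj t\<bar> = real n powr (-1/4) * \<bar>interp f (real n * s) - interp f (real n * t)\<bar>"
    unfolding G by (simp add: abs_mult right_diff_distrib[symmetric])
  also have "\<dots> \<le> real n powr (-1/4) * (3 * C * \<bar>real n * s - real n * t\<bar> powr (1/5))"
    using main[OF x] by (intro mult_left_mono) auto
  also have "\<bar>real n * s - real n * t\<bar> powr (1/5) = real n powr (1/5) * \<bar>s - t\<bar> powr (1/5)"
    using n1 by (simp add: right_diff_distrib[symmetric] abs_mult powr_mult)
  also have "real n powr (-1/4) * (3 * C * (real n powr (1/5) * \<bar>s - t\<bar> powr (1/5)))
      = 6 * \<gamma> * sqrt ((\<delta> + 1) * ln (real n)) * \<bar>s - t\<bar> powr (1/5) *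
        (real n powr (-1/4) * real n powr (1/4) * (real n powr (-1/5) * real n powr (1/5)))"
    unfolding C_def by (simp add: mult_ac)
  also have "real n powr (-1/4) * real n powr (1/4) * (real n powr (-1/5) * real n powr (1/5)) = 1"
    using n1 by (simp add: powr_add[symmetric])
  finally show ?thesis by simp
qed


lemma dist_bound:
  assumes T: "T \<in> Omega K n (2/5) \<delta> \<gamma> \<rho> \<mu>"
    and g: "\<gamma> > 0" and d: "\<delta> > 0" and n: "n \<ge> 3"
    and s: "s \<in> {0..1}" and t: "t \<in> {0..1}" and st: "s \<noteq> t" and st2: "\<bar>s - t\<bar> \<le> ln (real n) powr (-3)"
  shows "G_l1dist \<mu> K n T s t \<le> (real (card (IK K)) * (6 * \<gamma> * sqrt (\<delta> + 1))) * \<bar>s - t\<bar> powr (1/30)"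
proof -
  have n1: "n \<ge> 1" using n by simp
  have lnpos: "ln (real n) > 0" using n by simp
  have stp: "\<bar>s - t\<bar> > 0" using st by simp
  have "G_l1dist \<mu> K n T s t \<le> (\<Sum>kj\<in>IK K. 6 * \<gamma> * sqrt ((\<delta> + 1) * ln (real n)) * \<bar>s - t\<bar> powr (1/5))"
    unfolding G_l1dist_def by (rule sum_mono) (rule tree_bound[OF T _ g d n1 s t])
  also have "\<dots> = real (card (IK K)) * (6 * \<gamma> * sqrt (\<delta> + 1)) * (sqrt (ln (real n)) * \<bar>s - t\<bar> powr (1/5))"
    by (simp add: real_sqrt_mult mult_ac)
  also have "sqrt (ln (real n)) \<le> \<bar>s - t\<bar> powr (-1/6)"
  proof -
    have "sqrt (ln (real n)) = (ln (real n) powr (-3)) powr (-1/6)"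
      using lnpos by (simp add: powr_powr powr_half_sqrt[symmetric])
    also have "\<dots> \<le> \<bar>s - t\<bar> powr (-1/6)"
      by (rule powr_mono2'[OF _ stp st2]) simp
    finally show ?thesis .
  qed
  then have "real (card (IK K)) * (6 * \<gamma> * sqrt (\<delta> + 1)) * (sqrt (ln (real n)) * \<bar>s - t\<bar> powr (1/5))
      \<le> real (card (IK K)) * (6 * \<gamma> * sqrt (\<delta> + 1)) * (\<bar>s - t\<bar> powr (-1/6) * \<bar>s - t\<bar> powr (1/5))"
    using g d by (intro mult_left_mono mult_right_mono) auto
  also have "\<bar>s - t\<bar> powr (-1/6) * \<bar>s - t\<bar> powr (1/5) = \<bar>s - t\<bar> powr (1/30)"
    by (simp add: powr_add[symmetric])
  finally show ?thesis .
qed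


theorem lemma19:
  fixes \<mu> :: "nat \<Rightarrow> real" and K :: nat and \<nu> :: "nat \<Rightarrow> (nat \<Rightarrow> real) measure"
    and \<epsilon> \<alpha> \<delta> \<gamma> \<rho> \<alpha>' a :: real
  assumes "H1 \<mu> K" and "H2 \<mu> K \<nu>"
    and "\<epsilon> > 0" and "\<alpha> = 2/5" and "\<delta> > 0" and "\<gamma> > 0" and "\<rho> > 0"
    and "\<forall>\<^sub>F n in sequentially. gw_Z \<mu> n > 0 \<longrightarrow> Pn \<mu> n (Omega K n \<alpha> \<delta> \<gamma> \<rho> \<mu>) \<ge> 1 - \<epsilon>"
    and "\<alpha>' > 0" and "a > 0"
  shows "\<exists>\<beta>>0. \<exists>c>0. \<forall>\<^sub>F n in sequentially. \<forall>s\<in>{0..1}. \<forall>t\<in>{0..1}.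
           \<bar>s - t\<bar> \<le> ln (real n) powr (-3) \<longrightarrow>
           En \<mu> n (\<lambda>T. G_l1dist \<mu> K n T s t powr \<beta> * indicator (Omega K n \<alpha> \<delta> \<gamma> \<rho> \<mu>) T)
             \<le> c * \<bar>t - s\<bar> powr (1 + a)"
proof -
  have al: "\<alpha> = 2/5" and d: "\<delta> > 0" and g: "\<gamma> > 0" and a: "a > 0" using assms by auto
  have mu0: "\<And>k. 0 \<le> \<mu> k" using assms(1) unfolding H1_def by auto
  define D where "D = real (card (IK K)) * (6 * \<gamma> * sqrt (\<delta> + 1))"
  define \<beta> where "\<beta> = 30 * (1 + a)"
  define c where "c = (D + 1) powr \<beta>"
  have D0: "D \<ge> 0" unfolding D_def using g d by simp
  have b0: "\<beta> > 0" unfolding \<beta>_def using a by simp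
  have c0: "c > 0" unfolding c_def using D0 by simp
  have ev: "\<forall>\<^sub>F n in sequentially. n \<ge> (3::nat)" by (rule eventually_ge_at_top)
  have "\<forall>\<^sub>F n in sequentially. \<forall>s\<in>{0..1}. \<forall>t\<in>{0..1}.
           \<bar>s - t\<bar> \<le> ln (real n) powr (-3) \<longrightarrow>
           En \<mu> n (\<lambda>T. G_l1dist \<mu> K n T s t powr \<beta> * indicator (Omega K n \<alpha> \<delta> \<gamma> \<rho> \<mu>) T)
             \<le> c * \<bar>t - s\<bar> powr (1 + a)"
    using ev
  proof eventually_elim
    case (elim n)
    show ?case
    proof (intro ballI impI)
      fix s t :: real assume s: "s \<in> {0..1}" and t: "t \<in> {0..1}" and st2: "\<bar>s - t\<bar> \<le> ln (real n) powr (-3)"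
      define B where "B = c * \<bar>t - s\<bar> powr (1 + a)"
      define F where "F = (\<lambda>T. G_l1dist \<mu> K n T s t powr \<beta> * indicator (Omega K n \<alpha> \<delta> \<gamma> \<rho> \<mu>) T)"
      have B0: "B \<ge> 0" unfolding B_def using c0 by simp
      have FB: "\<And>T. F T \<le> B"
      proof -
        fix T
        show "F T \<le> B"
        proof (cases "T \<in> Omega K n \<alpha> \<delta> \<gamma> \<rho> \<mu>")
          case False
          then show ?thesis unfolding F_def using B0 by simp
        next
          case True
          then have TO: "T \<in> Omega K n (2/5) \<delta> \<gamma> \<rho> \<mu>" using al by simp
          show ?thesis
          proof (cases "s = t")
            case True
            then have "G_l1dist \<mu> K n T s t = 0" unfolding G_l1dist_def by simp
            then show ?thesis unfolding F_def using B0 by simp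
          next
            case False
            have dist0: "0 \<le> G_l1dist \<mu> K n T s t" unfolding G_l1dist_def by (simp add: sum_nonneg)
            have db: "G_l1dist \<mu> K n T s t \<le> D * \<bar>s - t\<bar> powr (1/30)"
              unfolding D_def using dist_bound[OF TO g d elim s t False st2] .
            have "G_l1dist \<mu> K n T s t powr \<beta> \<le> (D * \<bar>s - t\<bar> powr (1/30)) powr \<beta>"
              using db dist0 b0 by (intro powr_mono2) auto
            also have "\<dots> = D powr \<beta> * \<bar>s - t\<bar> powr (1 + a)"
            proof -
              have e: "\<beta> / 30 = 1 + a" unfolding \<beta>_def by simp
              show ?thesis using D0 by (simp add: powr_mult powr_powr e)
            qed
            also have "\<dots> \<le> c * \<bar>t - s\<bar> powr (1 + a)"
              unfolding c_def using D0 b0 by (simp add: abs_minus_commute mult_right_mono powr_mono2)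
            finally show ?thesis unfolding F_def B_def using True by simp
          qed
        qed
      qed
      have w0: "\<And>T. 0 \<le> gw_weight \<mu> T" unfolding gw_weight_def using mu0 by (simp add: prod_nonneg)
      have Z0: "0 \<le> gw_Z \<mu> n" unfolding gw_Z_def using w0 by (simp add: sum_nonneg)
      have S: "(\<Sum>T\<in>trees_n n. gw_weight \<mu> T * F T) \<le> B * gw_Z \<mu> n"
      proof -
        have "(\<Sum>T\<in>trees_n n. gw_weight \<mu> T * F T) \<le> (\<Sum>T\<in>trees_n n. gw_weight \<mu> T * B)"
          using w0 FB by (intro sum_mono mult_left_mono) auto
        also have "\<dots> = B * gw_Z \<mu> n" unfolding gw_Z_def by (simp add: sum_distrib_left mult_ac)
        finally show ?thesis .
      qed
      have "En \<mu> n F \<le> B"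
      proof (cases "gw_Z \<mu> n = 0")
        case True
        then show ?thesis unfolding En_def using B0 by simp
      next
        case False
        then have "gw_Z \<mu> n > 0" using Z0 by simp
        then show ?thesis unfolding En_def using S by (simp add: divide_le_eq)
      qed
      then show "En \<mu> n (\<lambda>T. G_l1dist \<mu> K n T s t powr \<beta> * indicator (Omega K n \<alpha> \<delta> \<gamma> \<rho> \<mu>) T)
             \<le> c * \<bar>t - s\<bar> powr (1 + a)" unfolding F_def B_def .
    qed
  qed
  then show ?thesis using b0 c0 by blast
qed

end
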